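(* Let $D\subseteq\Phi^+$ be a rook placement. Then the subspace $\mathfrak{p}\subseteq\mathfrak{n}$ spanned by the $e_{j,i}$, $(i,j)\in\Phi^+\setminus\mathcal{M}$, is a Lie subalgebra of $\mathfrak{n}$.
   Context: Let $n\ge1$ and let $\mathfrak{n}$ be the Lie algebra of strictly upper-triangular complex $n\times n$ matrices; $e_{i,j}$ denotes the elementary matrix with $1$ at position $(i,j)$. Let $\Phi^+=\{(i,j)\in\mathbb{Z}^2:1\le j<i\le n\}$, with rows $\mathcal{R}_k=\{(k,s)\in\Phi^+\}$ and columns $\mathcal{C}_k=\{(r,k)\in\Phi^+\}$. A rook placement is a subset $D\subseteq\Phi^+$ with $|D\cap\mathcal{R}_k|\le 1$ and $|D\cap\mathcal{C}_k|\le1$ for all $k$. Write $D=\{(i_1,j_1),\dots,(i_s,j_s)\}$ with $j_1<\dots<j_s$. Set $\mathcal{M}_{j_0}=\emptyset$ and, recursively for $r=1,\dots,s$, $\mathcal{M}_{j_r}=\{(i_r,q)\in\Phi^+:\ j_r<q<i_r,\ (q,j_r)\notin\bigcup_{l=0}^{r-1}\mathcal{M}_{j_l}\}$, and $\mathcal{M}=\bigcup_{r=1}^s\mathcal{M}_{j_r}$. *)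

theory Defs
  imports Complex_Main "HOL-Library.Function_Algebras"
begin

text \<open>n x n complex matrices are represented as functions nat => nat => complex,
  with rows and columns indexed by 1..n (entries outside are irrelevant / zero).\<close>

type_synonym cmat = "nat \<Rightarrow> nat \<Rightarrow> complex"

definition Phi_pos :: "nat \<Rightarrow> (nat \<times> nat) set" where
  "Phi_pos n = {(i, j). 1 \<le> j \<and> j < i \<and> i \<le> n}"

definition row_set :: "nat \<Rightarrow> nat \<Rightarrow> (nat \<times> nat) set" where
  "row_set n k = {p \<in> Phi_pos n. fst p = k}"

definition col_set :: "nat \<Rightarrow> nat \<Rightarrow> (nat \<times> nat) set" where
  "col_set n k = {p \<in> Phi_pos n. snd p = k}"

definition rook_placement :: "nat \<Rightarrow> (nat \<times> nat) set \<Rightarrow> bool" where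
  "rook_placement n D \<longleftrightarrow> D \<subseteq> Phi_pos n \<and>
     (\<forall>k. card (D \<inter> row_set n k) \<le> 1) \<and> (\<forall>k. card (D \<inter> col_set n k) \<le> 1)"

text \<open>The set M_j for column j, given the union U of all previous M_{j_l} (j_l < j).\<close>
definition M_step :: "nat \<Rightarrow> (nat \<times> nat) set \<Rightarrow> nat \<Rightarrow> (nat \<times> nat) set \<Rightarrow> (nat \<times> nat) set" where
  "M_step n D j U = {(i, q) \<in> Phi_pos n. (i, j) \<in> D \<and> j < q \<and> q < i \<and> (q, j) \<notin> U}"

primrec M_upto :: "nat \<Rightarrow> (nat \<times> nat) set \<Rightarrow> nat \<Rightarrow> (nat \<times> nat) set" where
  "M_upto n D 0 = {}"
| "M_upto n D (Suc j) = M_upto n D j \<union> M_step n D j (M_upto n D j)"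

definition M_set :: "nat \<Rightarrow> (nat \<times> nat) set \<Rightarrow> (nat \<times> nat) set" where
  "M_set n D = M_upto n D (Suc n)"

definition elem :: "nat \<Rightarrow> nat \<Rightarrow> cmat" where
  "elem i j = (\<lambda>a b. if a = i \<and> b = j then 1 else 0)"

definition msmult :: "complex \<Rightarrow> cmat \<Rightarrow> cmat" where
  "msmult c A = (\<lambda>a b. c * A a b)"

definition mmult :: "nat \<Rightarrow> cmat \<Rightarrow> cmat \<Rightarrow> cmat" where
  "mmult n A B = (\<lambda>a b. \<Sum>k = 1..n. A a k * B k b)"

definition lie_bracket :: "nat \<Rightarrow> cmat \<Rightarrow> cmat \<Rightarrow> cmat" where
  "lie_bracket n A B = mmult n A B - mmult n B A"

definition nilp_alg :: "nat \<Rightarrow> cmat set" where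
  "nilp_alg n = {A. \<forall>a b. A a b \<noteq> 0 \<longrightarrow> 1 \<le> a \<and> a < b \<and> b \<le> n}"

definition mspan :: "'i set \<Rightarrow> ('i \<Rightarrow> cmat) \<Rightarrow> cmat set" where
  "mspan S f = {A. \<exists>c. A = (\<Sum>s\<in>S. msmult (c s) (f s))}"

definition lie_subalgebra :: "nat \<Rightarrow> cmat set \<Rightarrow> bool" where
  "lie_subalgebra n P \<longleftrightarrow> P \<subseteq> nilp_alg n \<and> 0 \<in> P \<and>
     (\<forall>A\<in>P. \<forall>B\<in>P. A + B \<in> P) \<and> (\<forall>c. \<forall>A\<in>P. msmult c A \<in> P) \<and>
     (\<forall>A\<in>P. \<forall>B\<in>P. lie_bracket n A B \<in> P)"

end

theory Submission
  imports Defs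
begin

lemma M_upto_iff: "x \<in> M_upto n D m \<longleftrightarrow> (\<exists>c<m. x \<in> M_step n D c (M_upto n D c))"
  by (induction m) (auto simp: less_Suc_eq)

lemma M_upto_mono: "a \<le> b \<Longrightarrow> M_upto n D a \<subseteq> M_upto n D b"
  by (induction b) (auto simp: le_Suc_eq)

lemma M_step_Phi: "x \<in> M_step n D c U \<Longrightarrow> x \<in> Phi_pos n"
  by (auto simp: M_step_def)

lemma M_C: "(q, c) \<in> M_set n D \<longleftrightarrow> (q, c) \<in> M_upto n D c"
proof
  assume "(q, c) \<in> M_set n D"
  then obtain c' where c': "c' < Suc n" "(q, c) \<in> M_step n D c' (M_upto n D c')"
    unfolding M_set_def M_upto_iff by blast
  hence "c' < c" by (auto simp: M_step_def)
  hence "(q,c) \<in> M_upto n D (Suc c')" using c' by simp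
  thus "(q, c) \<in> M_upto n D c" using M_upto_mono[of "Suc c'" c n D] \<open>c' < c\<close> by auto
next
  assume "(q, c) \<in> M_upto n D c"
  then obtain c' where c': "c' < c" "(q, c) \<in> M_step n D c' (M_upto n D c')"
    unfolding M_upto_iff by blast
  hence "c < n" by (auto simp: M_step_def Phi_pos_def)
  thus "(q, c) \<in> M_set n D" unfolding M_set_def M_upto_iff using c' by (intro exI[of _ c']) auto
qed

lemma M_char: "(k, q) \<in> M_set n D \<longleftrightarrow>
   (k, q) \<in> Phi_pos n \<and> (\<exists>c. (k, c) \<in> D \<and> c < q \<and> q < k \<and> (q, c) \<notin> M_set n D)"
proof
  assume "(k, q) \<in> M_set n D"
  then obtain c where c: "c < Suc n" "(k, q) \<in> M_step n D c (M_upto n D c)"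
    unfolding M_set_def M_upto_iff by blast
  thus "(k, q) \<in> Phi_pos n \<and> (\<exists>c. (k, c) \<in> D \<and> c < q \<and> q < k \<and> (q, c) \<notin> M_set n D)"
    using M_C[of q c n D] by (auto simp: M_step_def)
next
  assume "(k, q) \<in> Phi_pos n \<and> (\<exists>c. (k, c) \<in> D \<and> c < q \<and> q < k \<and> (q, c) \<notin> M_set n D)"
  then obtain c where c: "(k, q) \<in> Phi_pos n" "(k, c) \<in> D" "c < q" "q < k" "(q, c) \<notin> M_set n D"
    by blast
  hence "c < Suc n" by (auto simp: Phi_pos_def)
  moreover have "(k, q) \<in> M_step n D c (M_upto n D c)"
    using c M_C[of q c n D] by (auto simp: M_step_def)
  ultimately show "(k, q) \<in> M_set n D" unfolding M_set_def M_upto_iff by blast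
qed

lemma closure:
  "(k, j) \<in> M_set n D \<Longrightarrow> j < i \<Longrightarrow> i < k \<Longrightarrow> (i, j) \<in> M_set n D \<or> (k, i) \<in> M_set n D"
proof (induction k arbitrary: i j rule: less_induct)
  case (less k)
  from less.prems(1) obtain c where c: "(k, j) \<in> Phi_pos n" "(k, c) \<in> D" "c < j" "(j, c) \<notin> M_set n D"
    using M_char by blast
  show ?case
  proof (cases "(i, c) \<in> M_set n D")
    case False
    hence "(k, i) \<in> M_set n D" using c less.prems
      by (subst M_char) (auto simp: Phi_pos_def)
    thus ?thesis by blast
  next
    case True
    then obtain c' where c': "(i, c) \<in> Phi_pos n" "(i, c') \<in> D" "c' < c" "(c, c') \<notin> M_set n D"
      using M_char by blast
    have "(j, c') \<notin> M_set n D"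
    proof
      assume "(j, c') \<in> M_set n D"
      from less.IH[OF _ this, of c] less.prems c c' show False by auto
    qed
    hence "(i, j) \<in> M_set n D" using c c' less.prems
      by (subst M_char) (auto simp: Phi_pos_def)
    thus ?thesis by blast
  qed
qed

lemma M_sub: "M_set n D \<subseteq> Phi_pos n"
  using M_char by auto

lemma eval_sum:
  assumes "finite S"
  shows "(\<Sum>s\<in>S. msmult (c s) ((\<lambda>(i, j). elem j i) s)) a b = (if (b, a) \<in> S then c (b, a) else 0)"
proof -
  have "(\<Sum>s\<in>S. msmult (c s) ((\<lambda>(i, j). elem j i) s)) a b
      = (\<Sum>s\<in>S. msmult (c s) ((\<lambda>(i, j). elem j i) s) a b)"
    by (induction S rule: infinite_finite_induct) auto
  also have "\<dots> = (\<Sum>s\<in>S. if s = (b, a) then c s else 0)"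
    by (rule sum.cong) (auto simp: msmult_def elem_def split: prod.splits)
  also have "\<dots> = (if (b, a) \<in> S then c (b, a) else 0)"
    using assms by (simp add: sum.delta')
  finally show ?thesis .
qed

lemma span_char:
  assumes "finite S"
  shows "mspan S (\<lambda>(i, j). elem j i) = {A. \<forall>a b. (b, a) \<notin> S \<longrightarrow> A a b = 0}"
proof
  show "mspan S (\<lambda>(i, j). elem j i) \<subseteq> {A. \<forall>a b. (b, a) \<notin> S \<longrightarrow> A a b = 0}"
    using eval_sum[OF assms] by (auto simp: mspan_def)
next
  show "{A. \<forall>a b. (b, a) \<notin> S \<longrightarrow> A a b = 0} \<subseteq> mspan S (\<lambda>(i, j). elem j i)"
  proof
    fix A :: cmat assume A: "A \<in> {A. \<forall>a b. (b, a) \<notin> S \<longrightarrow> A a b = 0}"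
    have "A = (\<Sum>s\<in>S. msmult ((\<lambda>(i, j). A j i) s) ((\<lambda>(i, j). elem j i) s))"
      using A by (auto simp: eval_sum[OF assms] fun_eq_iff)
    thus "A \<in> mspan S (\<lambda>(i, j). elem j i)" unfolding mspan_def by blast
  qed
qed

lemma finite_Phi: "finite (Phi_pos n)"
proof -
  have "Phi_pos n \<subseteq> {0..n} \<times> {0..n}" by (auto simp: Phi_pos_def)
  thus ?thesis by (rule finite_subset) auto
qed

theorem proposition2p6:
  fixes n :: nat and D :: "(nat \<times> nat) set"
  assumes "n \<ge> 1" and "rook_placement n D"
  shows "lie_subalgebra n (mspan (Phi_pos n - M_set n D) (\<lambda>(i, j). elem j i))"
proof -
  let ?S = "Phi_pos n - M_set n D"
  have fin: "finite ?S" using finite_Phi by auto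
  have P: "mspan ?S (\<lambda>(i, j). elem j i) = {A. \<forall>a b. (b, a) \<notin> ?S \<longrightarrow> A a b = 0}"
    by (rule span_char[OF fin])
  have br: "lie_bracket n A B a b = 0"
    if A: "\<forall>a b. (b, a) \<notin> ?S \<longrightarrow> A a b = 0" and B: "\<forall>a b. (b, a) \<notin> ?S \<longrightarrow> B a b = 0"
      and ab: "(b, a) \<notin> ?S" for A B a b
  proof -
    have key: "X a k * Y k b = 0"
      if X: "\<forall>a b. (b, a) \<notin> ?S \<longrightarrow> X a b = 0" and Y: "\<forall>a b. (b, a) \<notin> ?S \<longrightarrow> Y a b = 0"
      for X Y :: cmat and k
    proof (rule ccontr)
      assume "X a k * Y k b \<noteq> 0"
      hence s1: "(k, a) \<in> ?S" and s2: "(b, k) \<in> ?S" using X Y by auto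
      hence "(b, a) \<in> Phi_pos n" by (auto simp: Phi_pos_def)
      hence "(b, a) \<in> M_set n D" using ab by auto
      from closure[OF this, of k] s1 s2 show False by (auto simp: Phi_pos_def)
    qed
    show ?thesis
      unfolding lie_bracket_def mmult_def using key[OF A B] key[OF B A] by (simp del: mult_eq_0_iff)
  qed
  show ?thesis
    unfolding lie_subalgebra_def P
  proof (intro conjI ballI allI)
    show "{A. \<forall>a b. (b, a) \<notin> ?S \<longrightarrow> A a b = 0} \<subseteq> nilp_alg n"
      by (auto simp: nilp_alg_def Phi_pos_def)
  next
    show "0 \<in> {A. \<forall>a b. (b, a) \<notin> ?S \<longrightarrow> A a b = 0}" by simp
  next
    fix A B :: cmat assume "A \<in> {A. \<forall>a b. (b, a) \<notin> ?S \<longrightarrow> A a b = 0}" "B \<in> {A. \<forall>a b. (b, a) \<notin> ?S \<longrightarrow> A a b = 0}"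
    thus "A + B \<in> {A. \<forall>a b. (b, a) \<notin> ?S \<longrightarrow> A a b = 0}" by simp
  next
    fix c :: complex and A :: cmat assume "A \<in> {A. \<forall>a b. (b, a) \<notin> ?S \<longrightarrow> A a b = 0}"
    thus "msmult c A \<in> {A. \<forall>a b. (b, a) \<notin> ?S \<longrightarrow> A a b = 0}" by (simp add: msmult_def)
  next
    fix A B :: cmat assume "A \<in> {A. \<forall>a b. (b, a) \<notin> ?S \<longrightarrow> A a b = 0}" "B \<in> {A. \<forall>a b. (b, a) \<notin> ?S \<longrightarrow> A a b = 0}"
    thus "lie_bracket n A B \<in> {A. \<forall>a b. (b, a) \<notin> ?S \<longrightarrow> A a b = 0}" using br by blast
  qed
qed

end
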